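(* Let $X^+$ be a one-sided subshift with natural extension $\tilde X$, and let $c_kc_{k-1}\dots c_1c_0$ ($k\ge1$) be a block in $\mathcal L(\tilde X)$. Then $\mathrm{sig}(\mathrm{sig}(c_kc_{k-1}\dots c_1)c_0)=\mathrm{sig}(c_kc_{k-1}\dots c_1c_0)$.
   Context: $\mathcal A$ is a finite alphabet and $\sigma$ the shift, $(\sigma x)_i=x_{i+1}$. A one-sided subshift is a nonempty closed $\sigma$-invariant $X^+\subseteq\mathcal A^{\mathbb N}$; its natural extension is $\tilde X=\{x\in\mathcal A^{\mathbb Z}: x_px_{p+1}\dots\in X^+\ \forall p\in\mathbb Z\}$; $\mathcal L(\tilde X)$ is the set of finite blocks occurring in points of $\tilde X$. For $a_{-n}\dots a_0\in\mathcal L(\tilde X)$, $\mathrm{fol}(a_{-n}\dots a_0)=\{b_0b_1\dots\in X^+:\exists b\in\tilde X,\ b_{-n}\dots b_0=a_{-n}\dots a_0\}$. A block $a_{-n}\dots a_0\in\mathcal L(\tilde X)$ with $n\ge1$ is significant if $\mathrm{fol}(a_{-n}\dots a_0)\subsetneq\mathrm{fol}(a_{-n+1}\dots a_0)$; single symbols in $\mathcal L(\tilde X)$ are also counted as significant. The significant form $\mathrm{sig}(a_{-n}\dots a_0)$ is $a_{-k}\dots a_0$ with $k\le n$ maximal such that $a_{-k}\dots a_0$ is significant. *)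

theory Defs
  imports "HOL-Analysis.Analysis"
begin

text \<open>Blocks are lists,
  a block a_{-n} ... a_0 being the list [a_{-n}, ..., a_0].\<close>

definition shift1 :: "(nat \<Rightarrow> 'a) \<Rightarrow> (nat \<Rightarrow> 'a)" where
  "shift1 x = (\<lambda>n. x (Suc n))"

definition one_sided_subshift :: "(nat \<Rightarrow> 'a::finite) set \<Rightarrow> bool" where
  "one_sided_subshift X \<longleftrightarrow>
     X \<noteq> {} \<and>
     closedin (product_topology (\<lambda>_. discrete_topology (UNIV :: 'a set)) (UNIV :: nat set)) X \<and>
     shift1 ` X \<subseteq> X"

definition natext :: "(nat \<Rightarrow> 'a) set \<Rightarrow> (int \<Rightarrow> 'a) set" where
  "natext X = {x. \<forall>p::int. (\<lambda>n::nat. x (p + int n)) \<in> X}"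

definition occurs_at :: "'a list \<Rightarrow> (int \<Rightarrow> 'a) \<Rightarrow> int \<Rightarrow> bool" where
  "occurs_at w x p \<longleftrightarrow> (\<forall>i<length w. x (p + int i) = w ! i)"

definition lang :: "(nat \<Rightarrow> 'a) set \<Rightarrow> 'a list set" where
  "lang X = {w. \<exists>x\<in>natext X. \<exists>p. occurs_at w x p}"

text \<open>fol of the block w = a_{-n}...a_0 (n = length w - 1), placed at positions -n..0.\<close>
definition fol :: "(nat \<Rightarrow> 'a) set \<Rightarrow> 'a list \<Rightarrow> (nat \<Rightarrow> 'a) set" where
  "fol X w = {y \<in> X. \<exists>b\<in>natext X. occurs_at w b (1 - int (length w)) \<and> y = (\<lambda>j. b (int j))}"

definition significant :: "(nat \<Rightarrow> 'a) set \<Rightarrow> 'a list \<Rightarrow> bool" where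
  "significant X w \<longleftrightarrow> w \<in> lang X \<and>
     (length w = 1 \<or> (length w \<ge> 2 \<and> fol X w \<subset> fol X (tl w)))"

definition sig :: "(nat \<Rightarrow> 'a) set \<Rightarrow> 'a list \<Rightarrow> 'a list" where
  "sig X w = drop (LEAST m. significant X (drop m w)) w"

end

theory Submission
  imports Defs
begin

lemma occurs_drop: "occurs_at w x p \<Longrightarrow> occurs_at (drop m w) x (p + int m)"
  unfolding occurs_at_def
proof (intro allI impI)
  fix i assume h: "\<forall>i<length w. x (p + int i) = w ! i" and i: "i < length (drop m w)"
  then have "m + i < length w" by simp
  then have "x (p + int (m+i)) = w ! (m+i)" using h by blast
  then show "x (p + int m + int i) = drop m w ! i" using i by (simp add: add.assoc)
qed

lemma occurs_take: "occurs_at w x p \<Longrightarrow> occurs_at (take m w) x p"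
  unfolding occurs_at_def by auto

lemma lang_drop: "w \<in> lang X \<Longrightarrow> drop m w \<in> lang X"
  unfolding lang_def using occurs_drop by blast

lemma lang_take: "w \<in> lang X \<Longrightarrow> take m w \<in> lang X"
  unfolding lang_def using occurs_take by blast

lemma fol_tl: "fol X w \<subseteq> fol X (tl w)"
proof
  fix y assume "y \<in> fol X w"
  then obtain b where y: "y \<in> X" "b \<in> natext X" "occurs_at w b (1 - int (length w))" "y = (\<lambda>j. b (int j))"
    unfolding fol_def by blast
  show "y \<in> fol X (tl w)"
  proof (cases w)
    case Nil then show ?thesis using \<open>y \<in> fol X w\<close> by simp
  next
    case (Cons a v)
    have "occurs_at (drop 1 w) b (1 - int (length w) + int 1)" using occurs_drop y(3) by blast
    then have "occurs_at (tl w) b (1 - int (length (tl w)))" using Cons by simp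
    then show ?thesis unfolding fol_def using y by blast
  qed
qed

lemma nonsig_eq: "w \<in> lang X \<Longrightarrow> length w \<ge> 2 \<Longrightarrow> \<not> significant X w \<Longrightarrow> fol X w = fol X (tl w)"
  unfolding significant_def using fol_tl[of X w] by auto

lemma sig_ex: assumes "w \<in> lang X" "w \<noteq> []" shows "significant X (drop (length w - 1) w)"
proof -
  have "length (drop (length w - 1) w) = 1" using assms(2) by (cases w) auto
  then show ?thesis unfolding significant_def using lang_drop[OF assms(1)] by simp
qed

definition LL where "LL X w = (LEAST m. significant X (drop m w))"

lemma LL_props:
  assumes "w \<in> lang X" "w \<noteq> []"
  shows "LL X w \<le> length w - 1" "significant X (drop (LL X w) w)"
    "\<And>j. j < LL X w \<Longrightarrow> \<not> significant X (drop j w)"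
  using sig_ex[OF assms] unfolding LL_def
    by (auto intro: Least_le LeastI dest: not_less_Least)

lemma sig_LL: "sig X w = drop (LL X w) w"
  unfolding sig_def LL_def by simp

lemma fol_step:
  assumes "w \<in> lang X" "w \<noteq> []" "j < LL X w"
  shows "fol X (drop j w) = fol X (drop (Suc j) w)"
proof -
  have "LL X w \<le> length w - 1" using LL_props(1)[OF assms(1,2)] .
  then have "length (drop j w) \<ge> 2" using assms(3) by simp
  moreover have "\<not> significant X (drop j w)" using LL_props(3)[OF assms(1,2,3)] .
  ultimately have "fol X (drop j w) = fol X (tl (drop j w))"
    using nonsig_eq lang_drop[OF assms(1)] by blast
  then show ?thesis by (simp add: drop_Suc tl_drop)
qed

lemma fol_snoc:
  assumes "w \<noteq> []"
  shows "fol X (w @ [a]) = shift1 ` {y \<in> fol X w. y 1 = a}"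
proof
  show "fol X (w @ [a]) \<subseteq> shift1 ` {y \<in> fol X w. y 1 = a}"
  proof
    fix y assume "y \<in> fol X (w @ [a])"
    then obtain b where y: "b \<in> natext X" "occurs_at (w@[a]) b (1 - int (length (w@[a])))" "y = (\<lambda>j. b (int j))"
      unfolding fol_def by blast
    define b' where "b' = (\<lambda>i. b (i - 1))"
    have b'n: "b' \<in> natext X"
    proof -
      { fix p :: int
        have "(\<lambda>n::nat. b' (p + int n)) = (\<lambda>n. b ((p - 1) + int n))" unfolding b'_def
          by (rule ext, rule arg_cong[where f=b], linarith)
        then have "(\<lambda>n::nat. b' (p + int n)) \<in> X" using y(1) unfolding natext_def by simp }
      then show ?thesis unfolding natext_def by blast
    qed
    have occ: "occurs_at w b' (1 - int (length w))"
      unfolding occurs_at_def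
    proof (intro allI impI)
      fix i assume i: "i < length w"
      have "b (1 - int (length (w@[a])) + int i) = (w@[a]) ! i"
      proof -
        have i2: "i < length (w@[a])" using i by simp
        have "\<forall>i<length (w@[a]). b (1 - int (length (w@[a])) + int i) = (w@[a]) ! i"
          using y(2) unfolding occurs_at_def .
        then show ?thesis using i2 by blast
      qed
      then show "b' (1 - int (length w) + int i) = w ! i" using i unfolding b'_def
        by (simp add: nth_append algebra_simps)
    qed
    have a1: "b' 1 = a"
    proof -
      have h: "\<forall>i<length (w@[a]). b (1 - int (length (w@[a])) + int i) = (w@[a]) ! i"
        using y(2) unfolding occurs_at_def .
      have l: "length w < length (w@[a])" by simp
      have "length w < length (w@[a]) \<longrightarrow> b (1 - int (length (w@[a])) + int (length w)) = (w@[a]) ! length w"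
        using h by (rule spec)
      then have 1: "b (1 - int (length (w@[a])) + int (length w)) = (w@[a]) ! length w"
        using l by (rule mp)
      have 2: "1 - int (length (w@[a])) + int (length w) = 0" by simp
      have 3: "(w@[a]) ! length w = a" by simp
      have "b 0 = a" using 1 unfolding 2 3 .
      then show ?thesis unfolding b'_def by simp
    qed
    define y' where "y' = (\<lambda>j::nat. b' (int j))"
    have "(\<lambda>n::nat. b' (0 + int n)) \<in> X" using b'n unfolding natext_def by blast
    then have "y' \<in> X" unfolding y'_def by simp
    then have "y' \<in> fol X w" unfolding fol_def y'_def using b'n occ by blast
    moreover have "y' 1 = a" using a1 unfolding y'_def by simp
    moreover have "y = shift1 y'" unfolding shift1_def y'_def b'_def y(3) by (rule ext) simp
    ultimately show "y \<in> shift1 ` {y \<in> fol X w. y 1 = a}" by blast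
  qed
next
  show "shift1 ` {y \<in> fol X w. y 1 = a} \<subseteq> fol X (w @ [a])"
  proof
    fix z assume "z \<in> shift1 ` {y \<in> fol X w. y 1 = a}"
    then obtain y' b' where y': "z = shift1 y'" "y' 1 = a" "b' \<in> natext X"
      "occurs_at w b' (1 - int (length w))" "y' = (\<lambda>j. b' (int j))"
      unfolding fol_def by blast
    define b where "b = (\<lambda>i. b' (i + 1))"
    have bn: "b \<in> natext X"
    proof -
      { fix p :: int
        have "(\<lambda>n::nat. b (p + int n)) = (\<lambda>n. b' ((p + 1) + int n))" unfolding b_def
          by (rule ext, rule arg_cong[where f=b'], linarith)
        then have "(\<lambda>n::nat. b (p + int n)) \<in> X" using y'(3) unfolding natext_def by simp }
      then show ?thesis unfolding natext_def by blast
    qed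
    have occ: "occurs_at (w@[a]) b (1 - int (length (w@[a])))"
      unfolding occurs_at_def
    proof (intro allI impI)
      fix i assume i: "i < length (w@[a])"
      show "b (1 - int (length (w@[a])) + int i) = (w@[a]) ! i"
      proof (cases "i < length w")
        case True
        then have "b' (1 - int (length w) + int i) = w ! i" using y'(4) unfolding occurs_at_def by blast
        then show ?thesis using True unfolding b_def by (simp add: nth_append algebra_simps)
      next
        case False
        then have "i = length w" using i by simp
        then show ?thesis using y'(2,5) unfolding b_def by simp
      qed
    qed
    have "z = (\<lambda>j. b (int j))" unfolding y'(1,5) shift1_def b_def by (auto simp: add.commute)
    moreover have "(\<lambda>n::nat. b (0 + int n)) \<in> X" using bn unfolding natext_def by blast
    then have "(\<lambda>j::nat. b (int j)) \<in> X" by simp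
    ultimately show "z \<in> fol X (w @ [a])" unfolding fol_def using bn occ by blast
  qed
qed

lemma sig_shift:
  assumes "w \<in> lang X" "w \<noteq> []" "j0 < length w" "\<And>j. j < j0 \<Longrightarrow> \<not> significant X (drop j w)"
  shows "sig X w = sig X (drop j0 w)"
proof -
  let ?P = "\<lambda>m. significant X (drop m w)"
  have PL: "?P (LL X w)" using LL_props(2)[OF assms(1,2)] .
  have ge: "j0 \<le> LL X w" using PL assms(4) by (meson not_le)
  have eq: "\<And>m. drop m (drop j0 w) = drop (j0 + m) w" by (simp add: add.commute)
  have Pw: "?P (j0 + (LL X w - j0))" using PL ge by simp
  have L2: "LL X (drop j0 w) = (LEAST m. ?P (j0 + m))" unfolding LL_def eq ..
  have "(LEAST m. ?P (j0 + m)) \<le> LL X w - j0" using Pw by (rule Least_le)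
  moreover have "?P (j0 + (LEAST m. ?P (j0 + m)))" using Pw by (rule LeastI)
  then have "LL X w \<le> j0 + (LEAST m. ?P (j0 + m))" unfolding LL_def by (rule Least_le)
  ultimately have "LL X w = j0 + LL X (drop j0 w)" using L2 ge by linarith
  then show ?thesis unfolding sig_LL by (simp add: add.commute)
qed

theorem lemma5p1:
  fixes X :: "(nat \<Rightarrow> 'a::finite) set" and c :: "'a list"
  assumes "one_sided_subshift X"
    and "c \<in> lang X"
    and "length c \<ge> 2"
  shows "sig X (sig X (butlast c) @ [last c]) = sig X c"
proof -
  define u where "u = butlast c"
  define a where "a = last c"
  have c: "c = u @ [a]" unfolding u_def a_def using assms(3)
    by (metis append_butlast_last_id list.size(3) not_numeral_le_zero)
  have un: "u \<noteq> []" using assms(3) c by auto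
  have ul: "u \<in> lang X" using lang_take[OF assms(2), of "length c - 1"] unfolding u_def
    by (simp add: butlast_conv_take)
  define j0 where "j0 = LL X u"
  have j0le: "j0 \<le> length u - 1" using LL_props(1)[OF ul un] unfolding j0_def .
  have s: "sig X u @ [a] = drop j0 c" unfolding sig_LL j0_def[symmetric] c using j0le by simp
  have "sig X c = sig X (drop j0 c)"
  proof (rule sig_shift[OF assms(2)])
    show "c \<noteq> []" using c by simp
    show "j0 < length c" using j0le un c by simp
    fix j assume j: "j < j0"
    have f: "fol X (drop j u) = fol X (drop (Suc j) u)" using fol_step[OF ul un] j unfolding j0_def by blast
    have n1: "drop j u \<noteq> []" "drop (Suc j) u \<noteq> []" using j j0le un by auto
    have "fol X (drop j c) = fol X (drop (Suc j) c)"
      unfolding c using j j0le f fol_snoc[OF n1(1)] fol_snoc[OF n1(2)] by simp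
    then have "fol X (drop j c) = fol X (tl (drop j c))" by (simp add: drop_Suc tl_drop)
    moreover have "length (drop j c) \<ge> 2" using j j0le c by simp
    ultimately show "\<not> significant X (drop j c)" unfolding significant_def by auto
  qed
  then show ?thesis using s u_def a_def by simp
qed

end
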